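(* Let $S$ be an anti-rectangular AG-groupoid. The following are equivalent: (i) $S$ is fully idempotent, i.e. $I^{2}=I$ for every ideal $I$ of $S$; (ii) $A\cap B=AB$ for all ideals $A,B$ of $S$; (iii) the set $L_S$ of ideals of $S$, with the operation $A\wedge B=AB$, is a semilattice (i.e. $\wedge$ is a well-defined operation on $L_S$ which is commutative, associative and idempotent).
   Context: An AG-groupoid is a set $S$ with a binary operation satisfying $(ab)c=(cb)a$ for all $a,b,c\in S$. It is anti-rectangular if $a=(ba)b$ for all $a,b\in S$. For nonempty subsets, $AB=\{ab:a\in A,b\in B\}$, $I^{2}=II$. An ideal of $S$ is a nonempty subset $I$ with $SI\subseteq I$ and $IS\subseteq I$. *)

theory Defs
  imports Main
begin

definition AG_groupoid :: "'a set \<Rightarrow> ('a \<Rightarrow> 'a \<Rightarrow> 'a) \<Rightarrow> bool" where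
  "AG_groupoid S m \<longleftrightarrow> (\<forall>a\<in>S. \<forall>b\<in>S. m a b \<in> S) \<and>
     (\<forall>a\<in>S. \<forall>b\<in>S. \<forall>c\<in>S. m (m a b) c = m (m c b) a)"

definition anti_rectangular :: "'a set \<Rightarrow> ('a \<Rightarrow> 'a \<Rightarrow> 'a) \<Rightarrow> bool" where
  "anti_rectangular S m \<longleftrightarrow> (\<forall>a\<in>S. \<forall>b\<in>S. a = m (m b a) b)"

definition setprod :: "('a \<Rightarrow> 'a \<Rightarrow> 'a) \<Rightarrow> 'a set \<Rightarrow> 'a set \<Rightarrow> 'a set" where
  "setprod m A B = {m a b | a b. a \<in> A \<and> b \<in> B}"

definition is_ideal :: "'a set \<Rightarrow> ('a \<Rightarrow> 'a \<Rightarrow> 'a) \<Rightarrow> 'a set \<Rightarrow> bool" where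
  "is_ideal S m I \<longleftrightarrow> I \<noteq> {} \<and> I \<subseteq> S \<and> setprod m S I \<subseteq> I \<and> setprod m I S \<subseteq> I"

definition fully_idempotent :: "'a set \<Rightarrow> ('a \<Rightarrow> 'a \<Rightarrow> 'a) \<Rightarrow> bool" where
  "fully_idempotent S m \<longleftrightarrow> (\<forall>I. is_ideal S m I \<longrightarrow> setprod m I I = I)"

definition ideals_semilattice :: "'a set \<Rightarrow> ('a \<Rightarrow> 'a \<Rightarrow> 'a) \<Rightarrow> bool" where
  "ideals_semilattice S m \<longleftrightarrow>
     (\<forall>A B. is_ideal S m A \<and> is_ideal S m B \<longrightarrow> is_ideal S m (setprod m A B)) \<and>
     (\<forall>A B. is_ideal S m A \<and> is_ideal S m B \<longrightarrow> setprod m A B = setprod m B A) \<and>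
     (\<forall>A B C. is_ideal S m A \<and> is_ideal S m B \<and> is_ideal S m C \<longrightarrow>
        setprod m (setprod m A B) C = setprod m A (setprod m B C)) \<and>
     (\<forall>A. is_ideal S m A \<longrightarrow> setprod m A A = A)"

end

theory Submission
  imports Defs
begin

lemma key:
  assumes "AG_groupoid S m" and "anti_rectangular S m"
    and A: "is_ideal S m A" and B: "is_ideal S m B"
  shows "setprod m A B = A \<inter> B"
proof
  show "setprod m A B \<subseteq> A \<inter> B"
  proof
    fix x assume "x \<in> setprod m A B"
    then obtain a b where x: "x = m a b" "a \<in> A" "b \<in> B" by (auto simp: setprod_def)
    have "a \<in> S" "b \<in> S" using A B x unfolding is_ideal_def by auto
    have "m a b \<in> setprod m A S" "m a b \<in> setprod m S B"
      using x \<open>a \<in> S\<close> \<open>b \<in> S\<close> unfolding setprod_def by auto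
    then show "x \<in> A \<inter> B" using A B x unfolding is_ideal_def by auto
  qed
next
  show "A \<inter> B \<subseteq> setprod m A B"
  proof
    fix x assume xi: "x \<in> A \<inter> B"
    then have xS: "x \<in> S" using A unfolding is_ideal_def by auto
    have eq: "x = m (m x x) x" using assms(2) xS unfolding anti_rectangular_def by auto
    have "m x x \<in> setprod m A S" using xi xS unfolding setprod_def by auto
    then have "m x x \<in> A" using A unfolding is_ideal_def by auto
    then show "x \<in> setprod m A B" using xi eq unfolding setprod_def by auto
  qed
qed

theorem proposition5:
  assumes "AG_groupoid S m" and "anti_rectangular S m"
  shows "(fully_idempotent S m \<longleftrightarrow>
            (\<forall>A B. is_ideal S m A \<and> is_ideal S m B \<longrightarrow> A \<inter> B = setprod m A B))
       \<and> (fully_idempotent S m \<longleftrightarrow> ideals_semilattice S m)"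
proof -
  note k = key[OF assms]
  have fi: "fully_idempotent S m" unfolding fully_idempotent_def using k by auto
  have ii: "\<forall>A B. is_ideal S m A \<and> is_ideal S m B \<longrightarrow> A \<inter> B = setprod m A B" using k by auto
  have int_ideal: "is_ideal S m (A \<inter> B)" if "is_ideal S m A" "is_ideal S m B" for A B
  proof -
    have "setprod m A B \<noteq> {}" using that unfolding is_ideal_def setprod_def by auto
    then have "A \<inter> B \<noteq> {}" using k[OF that] by simp
    moreover have "setprod m S (A \<inter> B) \<subseteq> A \<inter> B" "setprod m (A \<inter> B) S \<subseteq> A \<inter> B"
      using that unfolding is_ideal_def setprod_def by blast+
    ultimately show ?thesis using that unfolding is_ideal_def by auto
  qed
  have sl: "ideals_semilattice S m"
    unfolding ideals_semilattice_def
  proof (intro conjI allI impI)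
    fix A B assume h: "is_ideal S m A \<and> is_ideal S m B"
    then show "is_ideal S m (setprod m A B)" using k int_ideal by auto
    show "setprod m A B = setprod m B A" using h k by (simp add: Int_commute)
  next
    fix A B C assume h: "is_ideal S m A \<and> is_ideal S m B \<and> is_ideal S m C"
    then show "setprod m (setprod m A B) C = setprod m A (setprod m B C)"
      using k int_ideal by (simp add: Int_assoc)
  next
    fix A assume "is_ideal S m A" then show "setprod m A A = A" using k by auto
  qed
  show ?thesis using fi ii sl by auto
qed

end
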